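(* Let $n\ge 1$. For every integer $N$ with $2n-1\leq N\leq n(n+1)/2$, there exists an exact phase-retrievable frame $\{f_i\}_{i=1}^N$ of length $N$ for $\mathbb{R}^n$.
   Context: All spaces are real. A finite sequence $\mathcal{F}=\{f_i\}_{i=1}^N$ in a finite-dimensional real inner product space $V$ is a frame for $V$ if it spans $V$. It is phase-retrievable (a PR frame) if whenever $x,y\in V$ satisfy $|\langle x,f_i\rangle|=|\langle y,f_i\rangle|$ for all $i$, then $x=\pm y$. Let $\mathrm{Sym}(V)$ be the space of self-adjoint operators on $V$, and $\mathcal{S}_2$ the set of those of rank at most $2$. For $\Lambda\subseteq\{1,\dots,N\}$ let $\mathcal{F}_\Lambda=\{f_i\}_{i\in\Lambda}$ and let $\Theta_{L(\mathcal{F}_\Lambda)}:\mathrm{Sym}(V)\to\mathbb{R}^{\Lambda}$, $A\mapsto(\langle Af_i,f_i\rangle)_{i\in\Lambda}$ (the analysis operator of $\{f_i\otimes f_i\}_{i\in\Lambda}$ for the Hilbert–Schmidt inner product). $\mathcal{F}$ has the exact PR-redundancy property if for every proper subset $\Lambda\subsetneq\{1,\dots,N\}$ one has $\ker(\Theta_{L(\mathcal{F}_\Lambda)})\cap\mathcal{S}_2\neq\ker(\Theta_{L(\mathcal{F})})\cap\mathcal{S}_2$. An exact phase-retrievable frame is a phase-retrievable frame with the exact PR-redundancy property. *)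

theory Defs
  imports "HOL-Analysis.Analysis"
begin

text \<open>A finite sequence f_0,...,f_{N-1} in real^'n (indices shifted to 0..N-1).
  Self-adjoint operators on real^'n (standard inner product) are symmetric matrices.\<close>

definition is_frame :: "nat \<Rightarrow> (nat \<Rightarrow> real^'n) \<Rightarrow> bool" where
  "is_frame N f \<longleftrightarrow> span (f ` {0..<N}) = UNIV"

definition phase_retrievable :: "nat \<Rightarrow> (nat \<Rightarrow> real^'n) \<Rightarrow> bool" where
  "phase_retrievable N f \<longleftrightarrow>
     (\<forall>x y. (\<forall>i<N. \<bar>x \<bullet> f i\<bar> = \<bar>y \<bullet> f i\<bar>) \<longrightarrow> x = y \<or> x = - y)"

definition PR_frame :: "nat \<Rightarrow> (nat \<Rightarrow> real^'n) \<Rightarrow> bool" where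
  "PR_frame N f \<longleftrightarrow> is_frame N f \<and> phase_retrievable N f"

definition Sym_ops :: "(real^'n^'n) set" where
  "Sym_ops = {A. transpose A = A}"

definition S2 :: "(real^'n^'n) set" where
  "S2 = {A \<in> Sym_ops. rank A \<le> 2}"

text \<open>Kernel of the analysis operator of {f_i \<otimes> f_i}_{i \<in> \<Lambda>} on Sym(V).\<close>
definition ker_Theta :: "(nat \<Rightarrow> real^'n) \<Rightarrow> nat set \<Rightarrow> (real^'n^'n) set" where
  "ker_Theta f \<Lambda> = {A \<in> Sym_ops. \<forall>i\<in>\<Lambda>. (A *v f i) \<bullet> f i = 0}"

definition exact_PR_redundancy :: "nat \<Rightarrow> (nat \<Rightarrow> real^'n) \<Rightarrow> bool" where
  "exact_PR_redundancy N f \<longleftrightarrow>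
     (\<forall>\<Lambda>. \<Lambda> \<subset> {0..<N} \<longrightarrow> ker_Theta f \<Lambda> \<inter> S2 \<noteq> ker_Theta f {0..<N} \<inter> S2)"

definition exact_PR_frame :: "nat \<Rightarrow> (nat \<Rightarrow> real^'n) \<Rightarrow> bool" where
  "exact_PR_frame N f \<longleftrightarrow> PR_frame N f \<and> exact_PR_redundancy N f"

end

theory Submission imports Defs "Jordan_Normal_Form.Determinant" begin


lemma geom_int: "(int B - 1) * (\<Sum>t<M. int B ^ t) = int B ^ M - 1"
  by (induction M) (auto simp: algebra_simps)

lemma powsum_zero:
  fixes c :: "nat \<Rightarrow> int" and B :: nat
  assumes fin: "finite T" and B2: "B \<ge> 2" and bnd: "\<forall>t\<in>T. \<bar>c t\<bar> < int B"
    and sum0: "(\<Sum>t\<in>T. c t * int B ^ t) = 0"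
  shows "\<forall>t\<in>T. c t = 0"
proof (rule ccontr)
  assume "\<not> (\<forall>t\<in>T. c t = 0)"
  define T' where "T' = {t\<in>T. c t \<noteq> 0}"
  have fT': "finite T'" using fin by (simp add: T'_def)
  have neT': "T' \<noteq> {}" using \<open>\<not> _\<close> by (auto simp: T'_def)
  define M where "M = Max T'"
  have MT': "M \<in> T'" using fT' neT' by (simp add: M_def)
  have sumT': "(\<Sum>t\<in>T'. c t * int B ^ t) = 0"
  proof -
    have "(\<Sum>t\<in>T. c t * int B ^ t) = (\<Sum>t\<in>T'. c t * int B ^ t)"
      by (rule sum.mono_neutral_right) (auto simp: fin T'_def)
    then show ?thesis using sum0 by simp
  qed
  have split: "(\<Sum>t\<in>T'. c t * int B ^ t) = c M * int B ^ M + (\<Sum>t\<in>T'-{M}. c t * int B ^ t)"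
    using fT' MT' by (simp add: sum.remove)
  have rest: "\<bar>\<Sum>t\<in>T'-{M}. c t * int B ^ t\<bar> \<le> int B ^ M - 1"
  proof -
    have "\<bar>\<Sum>t\<in>T'-{M}. c t * int B ^ t\<bar> \<le> (\<Sum>t\<in>T'-{M}. \<bar>c t * int B ^ t\<bar>)"
      by (rule sum_abs)
    also have "\<dots> \<le> (\<Sum>t\<in>T'-{M}. (int B - 1) * int B ^ t)"
    proof (rule sum_mono)
      fix t assume "t \<in> T' - {M}"
      then have "\<bar>c t\<bar> \<le> int B - 1" using bnd by (auto simp: T'_def)
      then show "\<bar>c t * int B ^ t\<bar> \<le> (int B - 1) * int B ^ t"
        by (simp add: abs_mult mult_right_mono)
    qed
    also have "\<dots> \<le> (\<Sum>t<M. (int B - 1) * int B ^ t)"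
    proof (rule sum_mono2)
      show "finite {..<M}" by simp
      show "T' - {M} \<subseteq> {..<M}"
      proof
        fix t assume t: "t \<in> T' - {M}"
        then have "t \<le> M" using fT' by (simp add: M_def)
        with t show "t \<in> {..<M}" by auto
      qed
      show "\<And>b. b \<in> {..<M} - (T' - {M}) \<Longrightarrow> 0 \<le> (int B - 1) * int B ^ b" using B2 by auto
    qed
    also have "\<dots> = int B ^ M - 1" using geom_int[of B M] by (simp add: sum_distrib_left)
    finally show ?thesis .
  qed
  have "\<bar>c M * int B ^ M\<bar> \<ge> int B ^ M"
  proof -
    have "\<bar>c M\<bar> \<ge> 1" using MT' by (auto simp: T'_def)
    then show ?thesis using B2 by (simp add: abs_mult mult_right_mono)
  qed
  then show False using split sumT' rest by linarith
qed

lemma digits_inj: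
  fixes d d' :: "nat \<Rightarrow> nat" and J :: "nat \<Rightarrow> nat"
  assumes B2: "B \<ge> 2" and injJ: "inj_on J {..<q}"
    and dB: "\<forall>i<q. d i < B" and dB': "\<forall>i<q. d' i < B"
    and eq: "(\<Sum>i<q. d i * B ^ J i) = (\<Sum>i<q. d' i * B ^ J i)"
  shows "\<forall>i<q. d i = d' i"
proof -
  define c where "c t = int (d (the_inv_into {..<q} J t)) - int (d' (the_inv_into {..<q} J t))" for t
  have "(\<Sum>i<q. (int (d i) - int (d' i)) * int B ^ J i) = 0"
  proof -
    have "int (\<Sum>i<q. d i * B ^ J i) = int (\<Sum>i<q. d' i * B ^ J i)" using eq by simp
    then have "(\<Sum>i<q. int (d i) * int B ^ J i) = (\<Sum>i<q. int (d' i) * int B ^ J i)"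
      by (simp add: of_nat_mult)
    then show ?thesis by (simp add: left_diff_distrib sum_subtractf)
  qed
  moreover have "(\<Sum>i<q. (int (d i) - int (d' i)) * int B ^ J i) = (\<Sum>t\<in>J ` {..<q}. c t * int B ^ t)"
    by (subst sum.reindex[OF injJ]) (auto simp: c_def the_inv_into_f_f[OF injJ])
  ultimately have s0: "(\<Sum>t\<in>J ` {..<q}. c t * int B ^ t) = 0" by simp
  have "\<forall>t\<in>J ` {..<q}. c t = 0"
  proof (rule powsum_zero[OF _ B2 _ s0])
    show "finite (J ` {..<q})" by simp
    show "\<forall>t\<in>J ` {..<q}. \<bar>c t\<bar> < int B"
    proof
      fix t assume "t \<in> J ` {..<q}"
      then obtain i where i: "i < q" "t = J i" by auto
      then have "c t = int (d i) - int (d' i)" by (simp add: c_def the_inv_into_f_f[OF injJ])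
      moreover have "d i < B" "d' i < B" using dB dB' i by auto
      ultimately show "\<bar>c t\<bar> < int B" by linarith
    qed
  qed
  then show ?thesis by (auto simp: c_def the_inv_into_f_f[OF injJ])
qed

lemma signed_pow2_nonzero:
  fixes E :: "'p \<Rightarrow> nat" and s :: "'p \<Rightarrow> int"
  assumes "finite V" "V \<noteq> {}" "inj_on E V" "\<forall>p\<in>V. s p = 1 \<or> s p = -1"
  shows "(\<Sum>p\<in>V. s p * 2 ^ E p) \<noteq> 0"
proof
  assume s0: "(\<Sum>p\<in>V. s p * 2 ^ E p) = 0"
  define c where "c t = s (the_inv_into V E t)" for t
  have "(\<Sum>p\<in>V. s p * 2 ^ E p) = (\<Sum>t\<in>E ` V. c t * int 2 ^ t)"
    by (subst sum.reindex[OF assms(3)]) (auto simp: c_def the_inv_into_f_f[OF assms(3)])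
  with s0 have "(\<Sum>t\<in>E ` V. c t * int 2 ^ t) = 0" by simp
  then have "\<forall>t\<in>E ` V. c t = 0"
    by (rule powsum_zero[rotated 3]) (use assms in \<open>auto simp: c_def the_inv_into_f_f\<close>)
  moreover obtain p where "p \<in> V" using assms(2) by auto
  ultimately have "s p = 0" by (auto simp: c_def the_inv_into_f_f[OF assms(3)])
  with assms(4) \<open>p \<in> V\<close> show False by auto
qed

lemma det_pattern_nonzero:
  fixes d J :: "nat \<Rightarrow> nat" and R :: "nat \<Rightarrow> nat \<Rightarrow> bool"
  assumes B2: "B \<ge> 2" and injJ: "inj_on J {..<q}" and injd: "inj_on d {..<q}"
    and dB: "\<forall>i<q. d i < B" and Rid: "\<forall>i<q. R i i"
  shows "Determinant.det (mat q q (\<lambda>(l,m). if R l m then (2::real) ^ (d m * B ^ J l) else 0)) \<noteq> 0"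
proof -
  define A where "A = mat q q (\<lambda>(l,m). if R l m then (2::real) ^ (d m * B ^ J l) else 0)"
  define P where "P = {p. p permutes {0..<q}}"
  define valid where "valid p = (\<forall>i<q. R i (p i))" for p :: "nat \<Rightarrow> nat"
  define E where "E p = (\<Sum>i<q. d (p i) * B ^ J i)" for p :: "nat \<Rightarrow> nat"
  define V where "V = {p\<in>P. valid p}"
  have finP: "finite P" by (simp add: P_def finite_permutations)
  have pin: "p i < q" if "p \<in> P" "i < q" for p i
    using that permutes_in_image[of p "{0..<q}" i] by (auto simp: P_def)
  have prodA: "(\<Prod>i = 0..<q. A $$ (i, p i)) = (if valid p then 2 ^ E p else 0)" if pP: "p \<in> P" for p
  proof -
    have eqf: "(\<Prod>i = 0..<q. A $$ (i, p i)) = (\<Prod>i<q. if R i (p i) then (2::real) ^ (d (p i) * B ^ J i) else 0)"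
      by (rule prod.cong) (auto simp: A_def pin[OF pP])
    show ?thesis
    proof (cases "valid p")
      case True
      then have "(\<Prod>i<q. if R i (p i) then (2::real) ^ (d (p i) * B ^ J i) else 0) = (\<Prod>i<q. (2::real) ^ (d (p i) * B ^ J i))"
        by (auto simp: valid_def)
      also have "\<dots> = 2 ^ E p" by (simp add: E_def power_sum)
      finally show ?thesis using eqf True by simp
    next
      case False
      then obtain i where "i < q" "\<not> R i (p i)" by (auto simp: valid_def)
      then have "(\<Prod>i<q. if R i (p i) then (2::real) ^ (d (p i) * B ^ J i) else 0) = 0"
        by (intro prod_zero) auto
      then show ?thesis using eqf False by simp
    qed
  qed
  have "Determinant.det A = (\<Sum>p\<in>P. of_int (sign p) * (\<Prod>i = 0..<q. A $$ (i, p i)))"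
    unfolding P_def by (rule det_def') (simp add: A_def)
  also have "\<dots> = (\<Sum>p\<in>P. of_int (sign p) * (if valid p then 2 ^ E p else 0))"
    by (rule sum.cong) (auto simp: prodA)
  also have "\<dots> = (\<Sum>p\<in>V. of_int (sign p) * 2 ^ E p)"
    unfolding V_def by (rule sum.mono_neutral_cong_right) (auto simp: finP)
  also have "\<dots> = of_int (\<Sum>p\<in>V. sign p * 2 ^ E p)" by simp
  finally have detA: "Determinant.det A = of_int (\<Sum>p\<in>V. sign p * 2 ^ E p)" .
  have "id \<in> V" by (auto simp: V_def P_def valid_def Rid permutes_id)
  moreover have "finite V" using finP by (simp add: V_def)
  moreover have "inj_on E V"
  proof (rule inj_onI)
    fix p p' assume pV: "p \<in> V" and p'V: "p' \<in> V" and Eq: "E p = E p'"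
    have "\<forall>i<q. d (p i) = d (p' i)"
      by (rule digits_inj[OF B2 injJ]) (use Eq pV p'V pin dB in \<open>auto simp: E_def V_def\<close>)
    then have "\<forall>i<q. p i = p' i"
      using injd pin pV p'V by (auto simp: V_def inj_on_def)
    moreover have "p i = i" "p' i = i" if "\<not> i < q" for i
      using pV p'V that permutes_not_in[of p "{0..<q}" i] permutes_not_in[of p' "{0..<q}" i]
      by (auto simp: V_def P_def)
    ultimately show "p = p'" by (metis ext)
  qed
  moreover have "\<forall>p\<in>V. sign p = 1 \<or> sign p = -1" by (auto simp: sign_def)
  ultimately have "(\<Sum>p\<in>V. sign p * 2 ^ E p) \<noteq> 0"
    by (intro signed_pow2_nonzero) auto
  then show ?thesis unfolding A_def[symmetric] using detA by (metis of_int_eq_0_iff)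
qed

definition gval :: "(nat \<Rightarrow> nat set) \<Rightarrow> nat \<Rightarrow> nat \<Rightarrow> nat \<Rightarrow> real" where
  "gval S B j c = (if c \<in> S j then 2 ^ (c * B ^ j) else 0)"

lemma kill_lemma:
  assumes finQ: "finite Q" and injf: "inj_on f Q" and fS: "\<forall>c\<in>Q. c \<in> S (f c)"
    and QB: "\<forall>c\<in>Q. c < B" and B2: "B \<ge> 2"
    and k: "\<forall>c\<in>Q. (\<Sum>c'\<in>Q. \<alpha> c' * gval S B (f c) c') = 0"
  shows "\<forall>c\<in>Q. \<alpha> c = 0"
proof -
  define qs where "qs = sorted_list_of_set Q"
  define q where "q = length qs"
  have dist: "distinct qs" and setq: "set qs = Q" using finQ by (auto simp: qs_def)
  have bij: "bij_betw ((!) qs) {..<q} Q" by (rule bij_betw_nth) (auto simp: dist setq q_def)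
  have qsQ: "qs ! l \<in> Q" if "l < q" for l using that setq q_def by auto
  define J where "J l = f (qs ! l)" for l
  define d where "d l = qs ! l" for l
  define R where "R l m = (qs ! m \<in> S (f (qs ! l)))" for l m
  have injJ: "inj_on J {..<q}"
    using injf bij unfolding J_def inj_on_def bij_betw_def by (metis (no_types, lifting) qsQ lessThan_iff)
  have injd: "inj_on d {..<q}" using bij unfolding d_def bij_betw_def by simp
  have dB: "\<forall>i<q. d i < B" using QB qsQ by (auto simp: d_def)
  have Rid: "\<forall>i<q. R i i" using fS qsQ by (auto simp: R_def)
  define A where "A = mat q q (\<lambda>(l,m). if R l m then (2::real) ^ (d m * B ^ J l) else 0)"
  have detA: "Determinant.det A \<noteq> 0"
    unfolding A_def using det_pattern_nonzero[of B J q d R] B2 injJ injd dB Rid by blast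
  have Aent: "A $$ (l, m) = gval S B (f (qs ! l)) (qs ! m)" if "l < q" "m < q" for l m
    using that by (simp add: A_def gval_def R_def d_def J_def)
  define v where "v = vec q (\<lambda>m. \<alpha> (qs ! m))"
  have Acar: "A \<in> carrier_mat q q" by (simp add: A_def)
  have vcar: "v \<in> carrier_vec q" by (simp add: v_def)
  have Av: "A *\<^sub>v v = 0\<^sub>v q"
  proof (rule eq_vecI)
    show "dim_vec (A *\<^sub>v v) = dim_vec (0\<^sub>v q)" by (simp add: A_def)
  next
    fix l assume "l < dim_vec (0\<^sub>v q)"
    then have l: "l < q" by simp
    have "(A *\<^sub>v v) $ l = (\<Sum>m\<in>{0..<q}. A $$ (l, m) * v $ m)"
      using l by (simp add: A_def scalar_prod_def row_def v_def)
    also have "\<dots> = (\<Sum>m<q. \<alpha> (qs ! m) * gval S B (f (qs ! l)) (qs ! m))"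
      by (rule sum.cong) (auto simp: Aent l v_def)
    also have "\<dots> = (\<Sum>c\<in>Q. \<alpha> c * gval S B (f (qs ! l)) c)"
      by (rule sum.reindex_bij_betw[OF bij])
    also have "\<dots> = 0" using k qsQ[OF l] by auto
    finally show "(A *\<^sub>v v) $ l = 0\<^sub>v q $ l" using l by simp
  qed
  have "v = 0\<^sub>v q"
    using det_0_iff_vec_prod_zero_field[OF Acar] detA Av vcar by blast
  then have "\<forall>m<q. \<alpha> (qs ! m) = 0"
    by (metis index_vec index_zero_vec(1) v_def)
  then show ?thesis using bij unfolding bij_betw_def by auto
qed

lemma hall_aux:
  fixes N :: "'a \<Rightarrow> 'b set"
  assumes "card X = n" "finite X" "\<forall>x\<in>X. finite (N x)" "\<forall>Y\<subseteq>X. card Y \<le> card (\<Union>(N ` Y))"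
  shows "\<exists>f. inj_on f X \<and> (\<forall>x\<in>X. f x \<in> N x)"
  using assms
proof (induction n arbitrary: X N rule: less_induct)
  case (less n X N)
  note finX = \<open>finite X\<close> and finN = \<open>\<forall>x\<in>X. finite (N x)\<close> and H = \<open>\<forall>Y\<subseteq>X. card Y \<le> card (\<Union>(N ` Y))\<close>
  show ?case
  proof (cases "X = {}")
    case True then show ?thesis by auto
  next
    case Xne: False
    have finU: "finite (\<Union>(N ` Y))" if "Y \<subseteq> X" for Y
      using that finX finN by (meson finite_UN_I finite_subset subsetD)
    show ?thesis
    proof (cases "\<forall>Y. Y \<subseteq> X \<and> Y \<noteq> {} \<and> Y \<noteq> X \<longrightarrow> card Y < card (\<Union>(N ` Y))")
      case True
      obtain x where xX: "x \<in> X" using Xne by auto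
      have "card {x} \<le> card (\<Union>(N ` {x}))" using H xX by blast
      then have "card {x} \<le> card (N x)" by simp
      then have "N x \<noteq> {}" using finN xX by auto
      then obtain y where yN: "y \<in> N x" by auto
      define X' where "X' = X - {x}"
      define N' where "N' z = N z - {y}" for z
      have "card X > 0" using finX xX card_gt_0_iff by blast
      then have cX': "card X' < n" using less.prems(1) finX xX by (simp add: X'_def)
      have "\<exists>f. inj_on f X' \<and> (\<forall>z\<in>X'. f z \<in> N' z)"
      proof (rule less.IH[OF cX' refl])
        show "finite X'" using finX by (simp add: X'_def)
        show "\<forall>z\<in>X'. finite (N' z)" using finN by (simp add: X'_def N'_def)
        show "\<forall>Y\<subseteq>X'. card Y \<le> card (\<Union>(N' ` Y))"
        proof (intro allI impI)
          fix Y assume YX': "Y \<subseteq> X'"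
          show "card Y \<le> card (\<Union>(N' ` Y))"
          proof (cases "Y = {}")
            case True then show ?thesis by simp
          next
            case False
            have YX: "Y \<subseteq> X" "Y \<noteq> X" using YX' xX by (auto simp: X'_def)
            then have lt: "card Y < card (\<Union>(N ` Y))" using True False by blast
            have "\<Union>(N' ` Y) = \<Union>(N ` Y) - {y}" by (auto simp: N'_def)
            moreover have "card (\<Union>(N ` Y) - {y}) \<ge> card (\<Union>(N ` Y)) - 1"
              by (simp add: card_Diff_singleton_if)
            ultimately show ?thesis using lt by simp
          qed
        qed
      qed
      then obtain f' where f': "inj_on f' X'" "\<forall>z\<in>X'. f' z \<in> N' z" by blast
      define f where "f = f'(x := y)"
      have "inj_on f X"
      proof (rule inj_onI)
        fix a b assume a: "a \<in> X" and b: "b \<in> X" and fab: "f a = f b"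
        show "a = b"
        proof (cases "a = x"; cases "b = x")
          assume "a = x" "b = x" then show ?thesis by simp
        next
          assume "a = x" "b \<noteq> x"
          then have "f' b = y" using fab by (simp add: f_def)
          moreover have "f' b \<in> N' b" using f'(2) b \<open>b \<noteq> x\<close> by (simp add: X'_def)
          ultimately show ?thesis by (simp add: N'_def)
        next
          assume "a \<noteq> x" "b = x"
          then have "f' a = y" using fab by (simp add: f_def)
          moreover have "f' a \<in> N' a" using f'(2) a \<open>a \<noteq> x\<close> by (simp add: X'_def)
          ultimately show ?thesis by (simp add: N'_def)
        next
          assume "a \<noteq> x" "b \<noteq> x"
          then show ?thesis using fab f'(1) a b by (auto simp: f_def X'_def inj_on_def)
        qed
      qed
      moreover have "\<forall>z\<in>X. f z \<in> N z" using f'(2) yN by (auto simp: f_def X'_def N'_def)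
      ultimately show ?thesis by blast
    next
      case False
      then obtain Y0 where Y0: "Y0 \<subseteq> X" "Y0 \<noteq> {}" "Y0 \<noteq> X" "card (\<Union>(N ` Y0)) \<le> card Y0"
        by (auto simp: not_less)
      have finY0: "finite Y0" using Y0(1) finX finite_subset by blast
      have "Y0 \<subset> X" using Y0 by blast
      then have cY0: "card Y0 < n" using finX less.prems(1) psubset_card_mono by blast
      have "\<exists>f. inj_on f Y0 \<and> (\<forall>z\<in>Y0. f z \<in> N z)"
        by (rule less.IH[OF cY0 refl finY0]) (use finN H Y0(1) in auto)
      then obtain f1 where f1: "inj_on f1 Y0" "\<forall>z\<in>Y0. f1 z \<in> N z" by blast
      define X2 where "X2 = X - Y0"
      define U0 where "U0 = \<Union>(N ` Y0)"
      define N2 where "N2 z = N z - U0" for z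
      have "card X2 = card X - card Y0" by (simp add: X2_def card_Diff_subset finY0 Y0(1))
      moreover have "card Y0 > 0" using finY0 Y0(2) by auto
      moreover have "card Y0 \<le> card X" using Y0(1) finX by (simp add: card_mono)
      ultimately have cX2: "card X2 < n" using less.prems(1) by linarith
      have "\<exists>f. inj_on f X2 \<and> (\<forall>z\<in>X2. f z \<in> N2 z)"
      proof (rule less.IH[OF cX2 refl])
        show "finite X2" using finX by (simp add: X2_def)
        show "\<forall>z\<in>X2. finite (N2 z)" using finN by (simp add: X2_def N2_def)
        show "\<forall>Z\<subseteq>X2. card Z \<le> card (\<Union>(N2 ` Z))"
        proof (intro allI impI)
          fix Z assume ZX2: "Z \<subseteq> X2"
          have finZ: "finite Z" using ZX2 finX finite_subset by (auto simp: X2_def)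
          have ZY: "Z \<union> Y0 \<subseteq> X" using ZX2 Y0(1) by (auto simp: X2_def)
          have disj: "Z \<inter> Y0 = {}" using ZX2 by (auto simp: X2_def)
          have eqU: "\<Union>(N ` (Z \<union> Y0)) = \<Union>(N2 ` Z) \<union> U0" by (auto simp: N2_def U0_def)
          have disjU: "\<Union>(N2 ` Z) \<inter> U0 = {}" by (auto simp: N2_def)
          have finU0: "finite U0" using finU[OF Y0(1)] by (simp add: U0_def)
          have finU2: "finite (\<Union>(N2 ` Z))"
            using finU[OF ZY] eqU by (metis finite_Un)
          have "card Z + card Y0 = card (Z \<union> Y0)" using finZ finY0 disj by (simp add: card_Un_disjoint)
          also have "\<dots> \<le> card (\<Union>(N ` (Z \<union> Y0)))" using H ZY by blast
          also have "\<dots> = card (\<Union>(N2 ` Z)) + card U0" using eqU disjU finU0 finU2 by (simp add: card_Un_disjoint)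
          finally show "card Z \<le> card (\<Union>(N2 ` Z))" using Y0(4) by (simp add: U0_def)
        qed
      qed
      then obtain f2 where f2: "inj_on f2 X2" "\<forall>z\<in>X2. f2 z \<in> N2 z" by blast
      define f where "f z = (if z \<in> Y0 then f1 z else f2 z)" for z
      have "inj_on f X"
      proof (rule inj_onI)
        fix a b assume a: "a \<in> X" and b: "b \<in> X" and fab: "f a = f b"
        have inU: "f1 z \<in> U0" if "z \<in> Y0" for z using f1(2) that by (auto simp: U0_def)
        have notU: "f2 z \<notin> U0" if "z \<in> X2" for z using f2(2) that by (auto simp: N2_def)
        show "a = b"
        proof (cases "a \<in> Y0"; cases "b \<in> Y0")
          assume "a \<in> Y0" "b \<in> Y0" then show ?thesis using fab f1(1) by (auto simp: f_def inj_on_def)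
        next
          assume "a \<in> Y0" "b \<notin> Y0"
          then have "f1 a \<in> U0" "f2 b \<notin> U0" using inU notU b by (auto simp: X2_def)
          then show ?thesis using fab \<open>a \<in> Y0\<close> \<open>b \<notin> Y0\<close> by (auto simp: f_def)
        next
          assume "a \<notin> Y0" "b \<in> Y0"
          then have "f1 b \<in> U0" "f2 a \<notin> U0" using inU notU a by (auto simp: X2_def)
          then show ?thesis using fab \<open>a \<notin> Y0\<close> \<open>b \<in> Y0\<close> by (auto simp: f_def)
        next
          assume "a \<notin> Y0" "b \<notin> Y0"
          then show ?thesis using fab f2(1) a b by (auto simp: f_def inj_on_def X2_def)
        qed
      qed
      moreover have "\<forall>z\<in>X. f z \<in> N z" using f1(2) f2(2) by (auto simp: f_def X2_def N2_def)
      ultimately show ?thesis by blast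
    qed
  qed
qed

lemma hall:
  fixes N :: "'a \<Rightarrow> 'b set"
  assumes "finite X" "\<forall>x\<in>X. finite (N x)" "\<forall>Y\<subseteq>X. card Y \<le> card (\<Union>(N ` Y))"
  shows "\<exists>f. inj_on f X \<and> (\<forall>x\<in>X. f x \<in> N x)"
  using hall_aux[OF refl assms] .



definition good :: "nat \<Rightarrow> nat \<Rightarrow> (nat \<Rightarrow> nat set) \<Rightarrow> bool" where
  "good n m S \<longleftrightarrow> (\<forall>j<m. S j \<noteq> {} \<and> S j \<subseteq> {..<n})
    \<and> (\<forall>i<n. card {j. j < m \<and> i \<in> S j} \<le> n - 1)
    \<and> (\<forall>Q P. Q \<subseteq> {..<n} \<longrightarrow> P \<subseteq> {..<n} \<longrightarrow> Q \<inter> P = {} \<longrightarrow> Q \<noteq> {} \<longrightarrow> P \<noteq> {} \<longrightarrow>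
          card Q + card P \<le> card {j. j < m \<and> S j \<inter> Q \<noteq> {} \<and> S j \<inter> P \<noteq> {}} + 1)"

definition starS :: "nat \<Rightarrow> nat \<Rightarrow> (nat \<Rightarrow> nat set) \<Rightarrow> nat \<Rightarrow> nat set" where
  "starS n m S j = (if j < m then S j else {j - m, n})"

lemma sub_Suc: "P \<subseteq> {..<Suc n} \<Longrightarrow> n \<notin> P \<Longrightarrow> P \<subseteq> {..<n}"
  by (metis lessThan_iff less_Suc_eq subset_iff)

lemma good_star:
  assumes g: "good n m S" and n1: "n \<ge> 1"
  shows "good (Suc n) (m + n) (starS n m S)"
proof -
  have g0: "\<forall>j<m. S j \<noteq> {} \<and> S j \<subseteq> {..<n}"
    and g3: "\<forall>i<n. card {j. j < m \<and> i \<in> S j} \<le> n - 1"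
    and g1: "\<And>Q P. Q \<subseteq> {..<n} \<Longrightarrow> P \<subseteq> {..<n} \<Longrightarrow> Q \<inter> P = {} \<Longrightarrow> Q \<noteq> {} \<Longrightarrow> P \<noteq> {} \<Longrightarrow>
          card Q + card P \<le> card {j. j < m \<and> S j \<inter> Q \<noteq> {} \<and> S j \<inter> P \<noteq> {}} + 1"
    using g unfolding good_def by blast+
  have Sn: "\<And>j x. j < m \<Longrightarrow> x \<in> S j \<Longrightarrow> x < n" using g0 by blast
  let ?S = "starS n m S"
  have c0: "\<forall>j<m+n. ?S j \<noteq> {} \<and> ?S j \<subseteq> {..<Suc n}"
  proof (intro allI impI)
    fix j assume j: "j < m + n"
    show "?S j \<noteq> {} \<and> ?S j \<subseteq> {..<Suc n}"
    proof (cases "j < m")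
      case True
      then have "S j \<subseteq> {..<n}" "S j \<noteq> {}" using g0 by auto
      then show ?thesis using True by (auto simp: starS_def)
    next
      case False then show ?thesis using j by (auto simp: starS_def)
    qed
  qed
  have c3: "\<forall>i<Suc n. card {j. j < m + n \<and> i \<in> ?S j} \<le> Suc n - 1"
  proof (intro allI impI)
    fix i assume i: "i < Suc n"
    show "card {j. j < m + n \<and> i \<in> ?S j} \<le> Suc n - 1"
    proof (cases "i = n")
      case True
      have "{j. j < m + n \<and> i \<in> ?S j} \<subseteq> {m..<m+n}"
        using Sn True by (auto simp: starS_def) (meson less_irrefl not_le)
      then have "card {j. j < m + n \<and> i \<in> ?S j} \<le> card {m..<m+n}" by (intro card_mono) auto
      then show ?thesis by simp
    next
      case False
      then have i': "i < n" using i by simp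
      have "{j. j < m + n \<and> i \<in> ?S j} \<subseteq> insert (m + i) {j. j < m \<and> i \<in> S j}"
        using i' by (auto simp: starS_def)
      then have "card {j. j < m + n \<and> i \<in> ?S j} \<le> card (insert (m + i) {j. j < m \<and> i \<in> S j})"
        by (intro card_mono) auto
      also have "\<dots> \<le> Suc (card {j. j < m \<and> i \<in> S j})" by (simp add: card_insert_le_m1)
      also have "\<dots> \<le> Suc (n - 1)"
      proof -
        have "card {j. j < m \<and> i \<in> S j} \<le> n - 1" using g3 i' by blast
        then show ?thesis by simp
      qed
      finally show ?thesis using n1 by simp
    qed
  qed
  have key: "card Q + card P \<le> card {j. j < m + n \<and> ?S j \<inter> Q \<noteq> {} \<and> ?S j \<inter> P \<noteq> {}} + 1"
    if Q: "Q \<subseteq> {..<Suc n}" and P: "P \<subseteq> {..<Suc n}" and QP: "Q \<inter> P = {}" and Qne: "Q \<noteq> {}"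
      and Pne: "P \<noteq> {}" and nQ: "n \<in> Q" for Q P
  proof -
    define R where "R = {j. j < m + n \<and> ?S j \<inter> Q \<noteq> {} \<and> ?S j \<inter> P \<noteq> {}}"
    have finR: "finite R" by (simp add: R_def)
    have "n \<notin> P" using QP nQ by blast
    then have Pn: "P \<subseteq> {..<n}" using P sub_Suc by blast
    define E where "E = (\<lambda>i. m + i) ` P"
    have ER: "E \<subseteq> R" using Pn nQ by (auto simp: E_def R_def starS_def)
    have cE: "card E = card P" by (simp add: E_def card_image)
    have finP: "finite P" using Pn finite_subset by blast
    show ?thesis
    proof (cases "Q - {n} = {}")
      case True
      then have "Q = {n}" using nQ by auto
      then have "card Q = 1" by simp
      moreover have "card E \<le> card R" using ER finR by (simp add: card_mono)
      ultimately show ?thesis using cE by (simp add: R_def)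
    next
      case False
      define Q' where "Q' = Q - {n}"
      have Q'n: "Q' \<subseteq> {..<n}" using Q sub_Suc[of Q' n] by (auto simp: Q'_def)
      have Q'P: "Q' \<inter> P = {}" using QP by (auto simp: Q'_def)
      have Q'ne: "Q' \<noteq> {}" using False by (simp add: Q'_def)
      have old: "card Q' + card P \<le> card {j. j < m \<and> S j \<inter> Q' \<noteq> {} \<and> S j \<inter> P \<noteq> {}} + 1"
        using g1[OF Q'n Pn Q'P Q'ne Pne] .
      define R0 where "R0 = {j. j < m \<and> S j \<inter> Q' \<noteq> {} \<and> S j \<inter> P \<noteq> {}}"
      have R0R: "R0 \<subseteq> R" by (auto simp: R0_def R_def starS_def Q'_def)
      have disj: "R0 \<inter> E = {}" by (auto simp: R0_def E_def)
      have "card R0 + card E = card (R0 \<union> E)"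
        by (rule card_Un_disjoint[symmetric]) (auto simp: R0_def E_def finP disj)
      also have "\<dots> \<le> card R" using R0R ER finR by (intro card_mono) auto
      finally have "card R0 + card P \<le> card R" using cE by simp
      moreover have "card Q = Suc (card Q')"
      proof -
        have "finite Q" using Q finite_subset by blast
        then show ?thesis using nQ unfolding Q'_def by (metis card_Suc_Diff1)
      qed
      moreover have "card P \<ge> 1" using Pne finP by (simp add: Suc_leI card_gt_0_iff)
      ultimately show ?thesis using old by (simp add: R0_def R_def)
    qed
  qed
  have c1: "\<forall>Q P. Q \<subseteq> {..<Suc n} \<longrightarrow> P \<subseteq> {..<Suc n} \<longrightarrow> Q \<inter> P = {} \<longrightarrow> Q \<noteq> {} \<longrightarrow> P \<noteq> {} \<longrightarrow>
          card Q + card P \<le> card {j. j < m + n \<and> ?S j \<inter> Q \<noteq> {} \<and> ?S j \<inter> P \<noteq> {}} + 1"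
  proof (intro allI impI)
    fix Q P assume Q: "Q \<subseteq> {..<Suc n}" and P: "P \<subseteq> {..<Suc n}" and QP: "Q \<inter> P = {}"
      and Qne: "Q \<noteq> {}" and Pne: "P \<noteq> {}"
    show "card Q + card P \<le> card {j. j < m + n \<and> ?S j \<inter> Q \<noteq> {} \<and> ?S j \<inter> P \<noteq> {}} + 1"
    proof (cases "n \<in> Q")
      case True then show ?thesis using key[OF Q P QP Qne Pne] by blast
    next
      case nQ: False
      show ?thesis
      proof (cases "n \<in> P")
        case True
        have "card P + card Q \<le> card {j. j < m + n \<and> ?S j \<inter> P \<noteq> {} \<and> ?S j \<inter> Q \<noteq> {}} + 1"
          using key[OF P Q _ Pne Qne True] QP by blast
        moreover have "{j. j < m + n \<and> ?S j \<inter> P \<noteq> {} \<and> ?S j \<inter> Q \<noteq> {}} = {j. j < m + n \<and> ?S j \<inter> Q \<noteq> {} \<and> ?S j \<inter> P \<noteq> {}}"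
          by blast
        ultimately show ?thesis by simp
      next
        case False
        have Qn: "Q \<subseteq> {..<n}" and Pn: "P \<subseteq> {..<n}" using Q P nQ False sub_Suc by blast+
        have "card Q + card P \<le> card {j. j < m \<and> S j \<inter> Q \<noteq> {} \<and> S j \<inter> P \<noteq> {}} + 1"
          using g1[OF Qn Pn QP Qne Pne] .
        moreover have "card {j. j < m \<and> S j \<inter> Q \<noteq> {} \<and> S j \<inter> P \<noteq> {}} \<le> card {j. j < m + n \<and> ?S j \<inter> Q \<noteq> {} \<and> ?S j \<inter> P \<noteq> {}}"
          by (intro card_mono) (auto simp: starS_def)
        ultimately show ?thesis by simp
      qed
    qed
  qed
  show ?thesis unfolding good_def using c0 c3 c1 by blast
qed

definition bzS :: "nat \<Rightarrow> nat \<Rightarrow> nat \<Rightarrow> nat set" where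
  "bzS n k j = (if j < k then {..k} else if j < 2*k+1 then insert (j-k) {k+1..<n} else {..<n})"

lemma card_two_le:
  assumes "X \<union> Y \<subseteq> R" "X \<inter> Y = {}" "finite R"
  shows "card X + card Y \<le> card R"
proof -
  have "finite X" "finite Y" using assms(1,3) finite_subset by auto
  then have "card X + card Y = card (X \<union> Y)" using assms(2) by (simp add: card_Un_disjoint)
  also have "\<dots> \<le> card R" using assms(1,3) by (simp add: card_mono)
  finally show ?thesis .
qed

lemma bz_case2:
  assumes n2: "2 \<le> n" and kn: "k \<le> n - 2"
    and Q: "Q \<subseteq> {..<n}" and P: "P \<subseteq> {..<n}" and QP: "Q \<inter> P = {}" and Pne: "P \<noteq> {}"
    and QZ: "Q \<inter> {k+1..<n} \<noteq> {}" and PB: "P \<subseteq> {..k}"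
  shows "card Q + card P \<le> card {j. j < n - 1 + k \<and> bzS n k j \<inter> Q \<noteq> {} \<and> bzS n k j \<inter> P \<noteq> {}} + 1"
proof -
  define m where "m = n - 1 + k"
  define R where "R = {j. j < m \<and> bzS n k j \<inter> Q \<noteq> {} \<and> bzS n k j \<inter> P \<noteq> {}}"
  have finR: "finite R" by (simp add: R_def)
  have Qne: "Q \<noteq> {}" using QZ by blast
  define F where "F = {2*k+1..<m}"
  define EP where "EP = (\<lambda>i. k + i) ` P"
  have FR: "F \<subseteq> R" using Qne Pne Q P by (auto simp: F_def R_def bzS_def m_def)
  have EPR: "EP \<subseteq> R"
  proof
    fix j assume "j \<in> EP"
    then obtain i where i: "i \<in> P" "j = k + i" by (auto simp: EP_def)
    have ik: "i \<le> k" using PB i by auto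
    have "bzS n k j = insert i {k+1..<n}" using i ik by (simp add: bzS_def)
    then show "j \<in> R" using i ik QZ kn n2 by (auto simp: R_def m_def)
  qed
  have cF: "card F = n - 2 - k" by (simp add: F_def m_def)
  have cEP: "card EP = card P" by (simp add: EP_def card_image)
  have finQ: "finite Q" "finite P" using Q P finite_subset by auto
  have cQP: "card Q + card P \<le> n"
  proof -
    have "card Q + card P = card (Q \<union> P)" using finQ QP by (simp add: card_Un_disjoint)
    also have "\<dots> \<le> card {..<n}" using Q P by (intro card_mono) auto
    finally show ?thesis by simp
  qed
  have cP1: "card P \<ge> 1" using Pne finQ by (simp add: Suc_leI card_gt_0_iff)
  show ?thesis
  proof (cases "Q \<inter> {..k} = {}")
    case True
    then have "Q \<subseteq> {k+1..<n}" using Q by (auto simp: subset_iff)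
    then have "card Q \<le> card {k+1..<n}" by (intro card_mono) auto
    then have cQ: "card Q \<le> n - k - 1" by simp
    have "F \<inter> EP = {}" using PB by (auto simp: F_def EP_def)
    then have "card F + card EP \<le> card R" using FR EPR finR by (intro card_two_le) auto
    then show ?thesis using cF cEP cQ kn n2 by (simp add: R_def m_def)
  next
    case False
    define Bs where "Bs = {..<k}"
    have BR: "Bs \<subseteq> R"
    proof
      fix j assume j: "j \<in> Bs"
      then have "bzS n k j = {..k}" by (simp add: Bs_def bzS_def)
      then show "j \<in> R" using j False PB Pne kn n2 by (auto simp: R_def m_def Bs_def)
    qed
    have "(F \<union> Bs) \<inter> EP = {}" "F \<inter> Bs = {}" using PB by (auto simp: F_def EP_def Bs_def)
    then have "card (F \<union> Bs) + card EP \<le> card R" using FR EPR BR finR by (intro card_two_le) auto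
    moreover have "card (F \<union> Bs) = card F + card Bs"
      using \<open>F \<inter> Bs = {}\<close> by (simp add: card_Un_disjoint F_def Bs_def)
    ultimately have "n - 2 - k + k + card P \<le> card R" using cF cEP by (simp add: Bs_def)
    then show ?thesis using cQP cP1 kn n2 by (simp add: R_def m_def)
  qed
qed

lemma good_bz:
  assumes n2: "2 \<le> n" and kn: "k \<le> n - 2"
  shows "good n (n - 1 + k) (bzS n k)"
proof -
  define m where "m = n - 1 + k"
  have c0: "\<forall>j<m. bzS n k j \<noteq> {} \<and> bzS n k j \<subseteq> {..<n}"
  proof (intro allI impI)
    fix j assume j: "j < m"
    have "0 \<in> {..<n}" using n2 by simp
    then show "bzS n k j \<noteq> {} \<and> bzS n k j \<subseteq> {..<n}"
      using kn n2 by (auto simp: bzS_def subset_iff lessThan_empty_iff)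
  qed
  have c3: "\<forall>i<n. card {j. j < m \<and> i \<in> bzS n k j} \<le> n - 1"
  proof (intro allI impI)
    fix i assume i: "i < n"
    show "card {j. j < m \<and> i \<in> bzS n k j} \<le> n - 1"
    proof (cases "i \<le> k")
      case True
      have sub: "{j. j < m \<and> i \<in> bzS n k j} \<subseteq> {..<k} \<union> ({k+i} \<union> {2*k+1..<m})"
      proof
        fix j assume "j \<in> {j. j < m \<and> i \<in> bzS n k j}"
        then have j: "j < m" "i \<in> bzS n k j" by auto
        show "j \<in> {..<k} \<union> ({k+i} \<union> {2*k+1..<m})"
        proof (cases "j < k")
          case True then show ?thesis by simp
        next
          case False
          show ?thesis
          proof (cases "j < 2*k+1")
            case True
            then have "i \<in> insert (j-k) {k+1..<n}" using j(2) \<open>\<not> j < k\<close> by (simp add: bzS_def)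
            then have "i = j - k" using \<open>i \<le> k\<close> by auto
            then show ?thesis using \<open>\<not> j < k\<close> by simp
          next
            case False then show ?thesis using j(1) by simp
          qed
        qed
      qed
      have "card {j. j < m \<and> i \<in> bzS n k j} \<le> card ({..<k} \<union> ({k+i} \<union> {2*k+1..<m}))"
        using sub by (intro card_mono) auto
      also have "\<dots> \<le> card {..<k} + card ({k+i} \<union> {2*k+1..<m})" by (rule card_Un_le)
      also have "\<dots> \<le> k + (1 + (m - (2*k+1)))"
        using card_Un_le[of "{k+i}" "{2*k+1..<m}"] by simp
      also have "\<dots> = n - 1" using kn n2 by (simp add: m_def)
      finally show ?thesis .
    next
      case False
      have sub: "{j. j < m \<and> i \<in> bzS n k j} \<subseteq> {k..<m}"
        using False by (auto simp: bzS_def not_less)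
      have "card {j. j < m \<and> i \<in> bzS n k j} \<le> card {k..<m}" using sub by (intro card_mono) auto
      also have "\<dots> = n - 1" using kn n2 by (simp add: m_def)
      finally show ?thesis .
    qed
  qed
  have c1: "card Q + card P \<le> card {j. j < m \<and> bzS n k j \<inter> Q \<noteq> {} \<and> bzS n k j \<inter> P \<noteq> {}} + 1"
    if Q: "Q \<subseteq> {..<n}" and P: "P \<subseteq> {..<n}" and QP: "Q \<inter> P = {}" and Qne: "Q \<noteq> {}" and Pne: "P \<noteq> {}"
    for Q P
  proof -
    define R where "R = {j. j < m \<and> bzS n k j \<inter> Q \<noteq> {} \<and> bzS n k j \<inter> P \<noteq> {}}"
    have finR: "finite R" by (simp add: R_def)
    have Rsym: "R = {j. j < m \<and> bzS n k j \<inter> P \<noteq> {} \<and> bzS n k j \<inter> Q \<noteq> {}}" by (auto simp: R_def)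
    define F where "F = {2*k+1..<m}"
    have FR: "F \<subseteq> R" using Qne Pne Q P by (auto simp: F_def R_def bzS_def m_def)
    have cF: "card F = n - 2 - k" by (simp add: F_def m_def)
    have finQ: "finite Q" "finite P" using Q P finite_subset by auto
    have cQP: "card Q + card P \<le> n"
    proof -
      have "card Q + card P = card (Q \<union> P)" using finQ QP by (simp add: card_Un_disjoint)
      also have "\<dots> \<le> card {..<n}" using Q P by (intro card_mono) auto
      finally show ?thesis by simp
    qed
    show ?thesis
    proof (cases "Q \<inter> {k+1..<n} \<noteq> {}"; cases "P \<inter> {k+1..<n} \<noteq> {}")
      assume QZ: "Q \<inter> {k+1..<n} \<noteq> {}" and PZ: "P \<inter> {k+1..<n} \<noteq> {}"
      define E where "E = {k..<2*k+1}"
      have ER: "E \<subseteq> R"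
      proof
        fix j assume j: "j \<in> E"
        then have "bzS n k j = insert (j-k) {k+1..<n}" by (simp add: E_def bzS_def)
        then show "j \<in> R" using j QZ PZ kn n2 by (auto simp: R_def m_def E_def)
      qed
      have "F \<inter> E = {}" by (auto simp: F_def E_def)
      then have "card F + card E \<le> card R" using FR ER finR by (intro card_two_le) auto
      then have "n - 1 \<le> card R" using cF kn n2 by (simp add: E_def)
      then show ?thesis using cQP by (simp add: R_def)
    next
      assume QZ: "Q \<inter> {k+1..<n} \<noteq> {}" and PZ: "\<not> P \<inter> {k+1..<n} \<noteq> {}"
      then have PB: "P \<subseteq> {..k}" using P by (auto simp: subset_iff)
      show ?thesis using bz_case2[OF n2 kn Q P QP Pne QZ PB] by (simp add: m_def)
    next
      assume QZ: "\<not> Q \<inter> {k+1..<n} \<noteq> {}" and PZ: "P \<inter> {k+1..<n} \<noteq> {}"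
      then have QB: "Q \<subseteq> {..k}" using Q by (auto simp: subset_iff)
      have "P \<inter> Q = {}" using QP by blast
      have "card P + card Q \<le> card {j. j < n - 1 + k \<and> bzS n k j \<inter> P \<noteq> {} \<and> bzS n k j \<inter> Q \<noteq> {}} + 1"
        using bz_case2[OF n2 kn P Q \<open>P \<inter> Q = {}\<close> Qne PZ QB] .
      then show ?thesis using Rsym by (simp add: R_def m_def add.commute)
    next
      assume QZ: "\<not> Q \<inter> {k+1..<n} \<noteq> {}" and PZ: "\<not> P \<inter> {k+1..<n} \<noteq> {}"
      then have QB: "Q \<subseteq> {..k}" and PB: "P \<subseteq> {..k}" using Q P by (auto simp: subset_iff)
      define Bs where "Bs = {..<k}"
      have BR: "Bs \<subseteq> R"
      proof
        fix j assume j: "j \<in> Bs"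
        then have "bzS n k j = {..k}" by (simp add: Bs_def bzS_def)
        then show "j \<in> R" using j QB PB Qne Pne kn n2 by (auto simp: R_def m_def Bs_def)
      qed
      have "F \<inter> Bs = {}" by (auto simp: F_def Bs_def)
      then have "card F + card Bs \<le> card R" using FR BR finR by (intro card_two_le) auto
      then have "n - 2 \<le> card R" using cF kn n2 by (simp add: Bs_def)
      moreover have "card Q + card P \<le> k + 1"
      proof -
        have "card Q + card P = card (Q \<union> P)" using finQ QP by (simp add: card_Un_disjoint)
        also have "\<dots> \<le> card {..k}" using QB PB by (intro card_mono) auto
        finally show ?thesis by simp
      qed
      ultimately show ?thesis using kn n2 by (simp add: R_def)
    qed
  qed
  show ?thesis unfolding good_def m_def[symmetric] using c0 c3 c1 by blast
qed

lemma good_one: "good 1 0 S"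
  unfolding good_def by (auto simp: lessThan_Suc)

lemma tri_step: "(Suc n) * (Suc n + 1) div 2 = n * (n + 1) div 2 + Suc n"
proof -
  have "(Suc n) * (Suc n + 1) = n * (n + 1) + 2 * Suc n" by (simp add: algebra_simps)
  then show ?thesis by simp
qed

lemma exists_pattern:
  "1 \<le> n \<Longrightarrow> 2*n - 1 \<le> N \<Longrightarrow> N \<le> n*(n+1) div 2 \<Longrightarrow> \<exists>m S. n + m = N \<and> good n m S"
proof (induction n arbitrary: N)
  case 0 then show ?case by simp
next
  case (Suc n)
  show ?case
  proof (cases "n = 0")
    case True
    then have "N = 1" using Suc.prems by simp
    then show ?thesis using True good_one by auto
  next
    case False
    then have n1: "1 \<le> n" by simp
    show ?thesis
    proof (cases "N \<le> 3 * Suc n - 3")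
      case True
      define k where "k = N - (2 * Suc n - 1)"
      have kn: "k \<le> Suc n - 2" using True Suc.prems by (simp add: k_def)
      have "good (Suc n) (Suc n - 1 + k) (bzS (Suc n) k)" using good_bz[OF _ kn] n1 by simp
      moreover have "Suc n + (Suc n - 1 + k) = N" using Suc.prems by (simp add: k_def)
      ultimately show ?thesis by blast
    next
      case False
      have lo: "2 * n - 1 \<le> N - Suc n" using False by simp
      have hi: "N - Suc n \<le> n * (n + 1) div 2" using Suc.prems(3) tri_step[of n] by simp
      obtain m S where mS: "n + m = N - Suc n" "good n m S" using Suc.IH[OF n1 lo hi] by blast
      have "good (Suc n) (m + n) (starS n m S)" using good_star[OF mS(2) n1] .
      moreover have "Suc n + (m + n) = N" using mS(1) False by simp
      ultimately show ?thesis by blast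
    qed
  qed
qed


no_notation Matrix.vec_index (infixl \<open>$\<close> 100)
no_notation Matrix.scalar_prod (infix \<open>\<bullet>\<close> 70)

definition ixh :: "(nat \<Rightarrow> 'n::finite) \<Rightarrow> 'n \<Rightarrow> nat" where
  "ixh h = inv_into {..<CARD('n)} h"

definition rowv :: "(nat \<Rightarrow> 'n::finite) \<Rightarrow> (nat \<Rightarrow> nat set) \<Rightarrow> nat \<Rightarrow> real^'n" where
  "rowv h S j = (\<chi> c. gval S (CARD('n) + 1) j (ixh h c))"

definition frm :: "(nat \<Rightarrow> 'n::finite) \<Rightarrow> (nat \<Rightarrow> nat set) \<Rightarrow> nat \<Rightarrow> real^'n" where
  "frm h S i = (if i < CARD('n) then axis (h i) 1 else rowv h S (i - CARD('n)))"

lemma dot_axis: "(x::real^'n) \<bullet> axis c 1 = x $ c"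
  by (simp add: inner_axis)

lemma ixh_h: assumes "bij_betw h {..<CARD('n::finite)} (UNIV::'n set)" "i < CARD('n)"
  shows "ixh h (h i) = i"
  using assms by (simp add: ixh_def bij_betw_def inv_into_f_f)

lemma h_ixh: assumes "bij_betw h {..<CARD('n::finite)} (UNIV::'n set)"
  shows "h (ixh h c) = c" "ixh h c < CARD('n)"
proof -
  have "c \<in> h ` {..<CARD('n)}" using assms by (simp add: bij_betw_def)
  then show "h (ixh h c) = c" "ixh h c < CARD('n)"
    unfolding ixh_def using f_inv_into_f[of c h] inv_into_into[of c h "{..<CARD('n)}"] by auto
qed

lemma dot_rowv:
  assumes hb: "bij_betw h {..<CARD('n::finite)} (UNIV::'n set)"
  shows "(x::real^'n) \<bullet> rowv h S j = (\<Sum>i<CARD('n). x $ h i * gval S (CARD('n) + 1) j i)"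
proof -
  have "x \<bullet> rowv h S j = (\<Sum>c\<in>UNIV. x $ c * gval S (CARD('n) + 1) j (ixh h c))"
    by (simp add: inner_vec_def rowv_def)
  also have "\<dots> = (\<Sum>i<CARD('n). x $ h i * gval S (CARD('n) + 1) j (ixh h (h i)))"
    by (rule sum.reindex_bij_betw[OF hb, symmetric])
  also have "\<dots> = (\<Sum>i<CARD('n). x $ h i * gval S (CARD('n) + 1) j i)"
    by (rule sum.cong) (auto simp: ixh_h[OF hb])
  finally show ?thesis .
qed

lemma kill_vec:
  assumes hb: "bij_betw h {..<CARD('n::finite)} (UNIV::'n set)"
    and Q: "Q \<subseteq> {..<CARD('n)}" and injf: "inj_on f Q" and fS: "\<forall>c\<in>Q. c \<in> S (f c)"
    and zero: "\<forall>i<CARD('n). i \<notin> Q \<longrightarrow> (x::real^'n) $ h i = 0"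
    and k: "\<forall>c\<in>Q. x \<bullet> rowv h S (f c) = 0"
  shows "\<forall>c\<in>Q. x $ h c = 0"
proof -
  define B where "B = CARD('n) + 1"
  have finQ: "finite Q" using Q finite_subset by blast
  have QB: "\<forall>c\<in>Q. c < B" using Q by (auto simp: B_def subset_iff)
  have B2: "B \<ge> 2" by (simp add: B_def)
  have k': "\<forall>c\<in>Q. (\<Sum>c'\<in>Q. (\<lambda>i. x $ h i) c' * gval S B (f c) c') = 0"
  proof
    fix c assume c: "c \<in> Q"
    have "(\<Sum>c'\<in>Q. x $ h c' * gval S B (f c) c') = (\<Sum>i<CARD('n). x $ h i * gval S B (f c) i)"
      by (rule sum.mono_neutral_left) (use Q zero in auto)
    also have "\<dots> = x \<bullet> rowv h S (f c)" by (simp add: dot_rowv[OF hb] B_def)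
    also have "\<dots> = 0" using k c by blast
    finally show "(\<Sum>c'\<in>Q. (\<lambda>i. x $ h i) c' * gval S B (f c) c') = 0" by simp
  qed
  show ?thesis using kill_lemma[OF finQ injf fS QB B2 k'] by simp
qed

lemma vec_zero_from_h:
  assumes hb: "bij_betw h {..<CARD('n::finite)} (UNIV::'n set)"
    and z: "\<forall>i<CARD('n). (x::real^'n) $ h i = 0"
  shows "x = 0"
proof -
  have "x $ c = 0" for c
    using z h_ixh[OF hb, of c] by metis
  then show ?thesis by (simp add: Finite_Cartesian_Product.vec_eq_iff)
qed

lemma zero_of_kill:
  assumes hb: "bij_betw h {..<CARD('n::finite)} (UNIV::'n set)"
    and g: "good CARD('n) m S" and c: "c < CARD('n)" and xc: "(x::real^'n) $ h c = 0"
    and k: "\<forall>j<m. c \<in> S j \<longrightarrow> x \<bullet> rowv h S j = 0"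
  shows "x = 0"
proof -
  define n where "n = CARD('n)"
  have g1: "\<And>Q P. Q \<subseteq> {..<n} \<Longrightarrow> P \<subseteq> {..<n} \<Longrightarrow> Q \<inter> P = {} \<Longrightarrow> Q \<noteq> {} \<Longrightarrow> P \<noteq> {} \<Longrightarrow>
          card Q + card P \<le> card {j. j < m \<and> S j \<inter> Q \<noteq> {} \<and> S j \<inter> P \<noteq> {}} + 1"
    using g unfolding good_def n_def by blast
  define X where "X = {..<n} - {c}"
  define N where "N i = {j. j < m \<and> c \<in> S j \<and> i \<in> S j}" for i
  have "\<exists>f. inj_on f X \<and> (\<forall>i\<in>X. f i \<in> N i)"
  proof (rule hall)
    show "finite X" by (simp add: X_def)
    show "\<forall>i\<in>X. finite (N i)" by (simp add: N_def)
    show "\<forall>Y\<subseteq>X. card Y \<le> card (\<Union>(N ` Y))"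
    proof (intro allI impI)
      fix Y assume YX: "Y \<subseteq> X"
      show "card Y \<le> card (\<Union>(N ` Y))"
      proof (cases "Y = {}")
        case True then show ?thesis by simp
      next
        case False
        have "card {c} + card Y \<le> card {j. j < m \<and> S j \<inter> {c} \<noteq> {} \<and> S j \<inter> Y \<noteq> {}} + 1"
          by (rule g1) (use YX c False in \<open>auto simp: X_def n_def\<close>)
        moreover have "{j. j < m \<and> S j \<inter> {c} \<noteq> {} \<and> S j \<inter> Y \<noteq> {}} = \<Union>(N ` Y)"
          by (auto simp: N_def)
        ultimately show ?thesis by simp
      qed
    qed
  qed
  then obtain f where f: "inj_on f X" "\<forall>i\<in>X. f i \<in> N i" by blast
  have "\<forall>i\<in>X. x $ h i = 0"
  proof (rule kill_vec[OF hb _ f(1)])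
    show "X \<subseteq> {..<CARD('n)}" by (auto simp: X_def n_def)
    show "\<forall>i\<in>X. i \<in> S (f i)" using f(2) by (auto simp: N_def)
    show "\<forall>i<CARD('n). i \<notin> X \<longrightarrow> x $ h i = 0" using xc by (auto simp: X_def n_def)
    show "\<forall>i\<in>X. x \<bullet> rowv h S (f i) = 0" using f(2) k by (auto simp: N_def)
  qed
  then have "\<forall>i<CARD('n). x $ h i = 0" using xc by (auto simp: X_def n_def)
  then show ?thesis by (rule vec_zero_from_h[OF hb])
qed

lemma hall_deficient:
  assumes hb: "bij_betw h {..<CARD('n::finite)} (UNIV::'n set)"
    and Qd: "Q = {i. i < CARD('n) \<and> (x::real^'n) $ h i \<noteq> 0}" and Qne: "Q \<noteq> {}"
    and Kd: "K = {j. j < m \<and> x \<bullet> rowv h S j = 0}"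
  shows "\<exists>Q'\<subseteq>Q. Q' \<noteq> {} \<and> card {j. j < m \<and> j \<in> K \<and> S j \<inter> Q' \<noteq> {}} < card Q'"
proof (rule ccontr)
  assume "\<not> ?thesis"
  then have H: "\<forall>Q'\<subseteq>Q. Q' \<noteq> {} \<longrightarrow> card Q' \<le> card {j. j < m \<and> j \<in> K \<and> S j \<inter> Q' \<noteq> {}}"
    by (auto simp: not_less)
  define N where "N i = {j. j < m \<and> j \<in> K \<and> i \<in> S j}" for i
  have "\<exists>f. inj_on f Q \<and> (\<forall>i\<in>Q. f i \<in> N i)"
  proof (rule hall)
    show "finite Q" by (simp add: Qd)
    show "\<forall>i\<in>Q. finite (N i)" by (simp add: N_def)
    show "\<forall>Y\<subseteq>Q. card Y \<le> card (\<Union>(N ` Y))"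
    proof (intro allI impI)
      fix Y assume YQ: "Y \<subseteq> Q"
      show "card Y \<le> card (\<Union>(N ` Y))"
      proof (cases "Y = {}")
        case True then show ?thesis by simp
      next
        case False
        have "{j. j < m \<and> j \<in> K \<and> S j \<inter> Y \<noteq> {}} = \<Union>(N ` Y)" by (auto simp: N_def)
        then show ?thesis using H YQ False by metis
      qed
    qed
  qed
  then obtain f where f: "inj_on f Q" "\<forall>i\<in>Q. f i \<in> N i" by blast
  have "\<forall>i\<in>Q. x $ h i = 0"
  proof (rule kill_vec[OF hb _ f(1)])
    show "Q \<subseteq> {..<CARD('n)}" by (auto simp: Qd)
    show "\<forall>i\<in>Q. i \<in> S (f i)" using f(2) by (auto simp: N_def)
    show "\<forall>i<CARD('n). i \<notin> Q \<longrightarrow> x $ h i = 0" by (auto simp: Qd)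
    show "\<forall>i\<in>Q. x \<bullet> rowv h S (f i) = 0" using f(2) by (auto simp: N_def Kd)
  qed
  then show False using Qne by (auto simp: Qd)
qed

lemma frm_basis: "i < CARD('n::finite) \<Longrightarrow> (x::real^'n) \<bullet> frm h S i = x $ h i"
  by (simp add: frm_def dot_axis)

lemma frm_row: "(x::real^'n::finite) \<bullet> frm h S (CARD('n) + j) = x \<bullet> rowv h S j"
  by (simp add: frm_def)

lemma no_cover:
  assumes hb: "bij_betw h {..<CARD('n::finite)} (UNIV::'n set)"
    and g: "good CARD('n) m S" and a0: "(a::real^'n) \<noteq> 0" and b0: "(b::real^'n) \<noteq> 0"
  shows "\<exists>i < CARD('n) + m. (a \<bullet> frm h S i) * (b \<bullet> frm h S i) \<noteq> 0"
proof (rule ccontr)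
  assume "\<not> ?thesis"
  then have all0: "\<forall>i < CARD('n) + m. (a \<bullet> frm h S i) * (b \<bullet> frm h S i) = 0" by auto
  define n where "n = CARD('n)"
  have g1: "\<And>Q P. Q \<subseteq> {..<n} \<Longrightarrow> P \<subseteq> {..<n} \<Longrightarrow> Q \<inter> P = {} \<Longrightarrow> Q \<noteq> {} \<Longrightarrow> P \<noteq> {} \<Longrightarrow>
          card Q + card P \<le> card {j. j < m \<and> S j \<inter> Q \<noteq> {} \<and> S j \<inter> P \<noteq> {}} + 1"
    using g unfolding good_def n_def by blast
  have basis0: "a $ h i * b $ h i = 0" if "i < n" for i
    using all0[rule_format, of i] that by (simp add: frm_basis n_def)
  have row0: "a \<bullet> rowv h S j = 0 \<or> b \<bullet> rowv h S j = 0" if "j < m" for j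
    using all0[rule_format, of "n + j"] that by (simp add: frm_row n_def)
  define Q where "Q = {i. i < n \<and> a $ h i \<noteq> 0}"
  define P where "P = {i. i < n \<and> b $ h i \<noteq> 0}"
  define Ka where "Ka = {j. j < m \<and> a \<bullet> rowv h S j = 0}"
  define Kb where "Kb = {j. j < m \<and> b \<bullet> rowv h S j = 0}"
  have Qne: "Q \<noteq> {}"
  proof
    assume "Q = {}"
    then have "\<forall>i<CARD('n). a $ h i = 0" by (auto simp: Q_def n_def)
    then show False using vec_zero_from_h[OF hb] a0 by blast
  qed
  have Pne: "P \<noteq> {}"
  proof
    assume "P = {}"
    then have "\<forall>i<CARD('n). b $ h i = 0" by (auto simp: P_def n_def)
    then show False using vec_zero_from_h[OF hb] b0 by blast
  qed
  obtain Q' where Q': "Q' \<subseteq> Q" "Q' \<noteq> {}" "card {j. j < m \<and> j \<in> Ka \<and> S j \<inter> Q' \<noteq> {}} < card Q'"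
    using hall_deficient[OF hb _ Qne Ka_def] Q_def n_def by blast
  obtain P' where P': "P' \<subseteq> P" "P' \<noteq> {}" "card {j. j < m \<and> j \<in> Kb \<and> S j \<inter> P' \<noteq> {}} < card P'"
    using hall_deficient[OF hb _ Pne Kb_def] P_def n_def by blast
  have QP: "Q' \<inter> P' = {}" using Q'(1) P'(1) basis0 by (auto simp: Q_def P_def)
  have Qn: "Q' \<subseteq> {..<n}" "P' \<subseteq> {..<n}" using Q'(1) P'(1) by (auto simp: Q_def P_def)
  have c1: "card Q' + card P' \<le> card {j. j < m \<and> S j \<inter> Q' \<noteq> {} \<and> S j \<inter> P' \<noteq> {}} + 1"
    using g1[OF Qn QP Q'(2) P'(2)] .
  have sub: "{j. j < m \<and> S j \<inter> Q' \<noteq> {} \<and> S j \<inter> P' \<noteq> {}} \<subseteq>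
      {j. j < m \<and> j \<in> Ka \<and> S j \<inter> Q' \<noteq> {}} \<union> {j. j < m \<and> j \<in> Kb \<and> S j \<inter> P' \<noteq> {}}"
    using row0 by (auto simp: Ka_def Kb_def)
  have "card {j. j < m \<and> S j \<inter> Q' \<noteq> {} \<and> S j \<inter> P' \<noteq> {}} \<le>
      card ({j. j < m \<and> j \<in> Ka \<and> S j \<inter> Q' \<noteq> {}} \<union> {j. j < m \<and> j \<in> Kb \<and> S j \<inter> P' \<noteq> {}})"
    by (rule card_mono[OF _ sub]) simp
  also have "\<dots> \<le> card {j. j < m \<and> j \<in> Ka \<and> S j \<inter> Q' \<noteq> {}} + card {j. j < m \<and> j \<in> Kb \<and> S j \<inter> P' \<noteq> {}}"
    by (rule card_Un_le)
  finally show False using c1 Q'(3) P'(3) by linarith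
qed

lemma rowv_h: "bij_betw h {..<CARD('n::finite)} (UNIV::'n set) \<Longrightarrow> c < CARD('n) \<Longrightarrow>
    rowv h S j $ h c = gval S (CARD('n) + 1) j c"
  by (simp add: rowv_def ixh_h)

lemma axis_dot: "axis c 1 \<bullet> (x::real^'n) = x $ c"
  by (simp add: inner_commute dot_axis)

lemma exists_orth:
  fixes W :: "(real^'n::finite) set"
  assumes "finite W" "card W < CARD('n)"
  obtains u where "u \<noteq> 0" "\<forall>w\<in>W. u \<bullet> w = 0"
proof -
  have "dim W \<le> card W" by (rule dim_le_card[OF span_superset assms(1)])
  then have "dim W < DIM(real^'n)" using assms(2) by simp
  then obtain u where u: "u \<noteq> 0" "\<And>y. y \<in> span W \<Longrightarrow> real_inner_class.orthogonal u y"
    using orthogonal_to_subspace_exists[of W] by blast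
  have "\<forall>w\<in>W. u \<bullet> w = 0"
  proof
    fix w assume "w \<in> W"
    then have "w \<in> span W" by (rule span_base)
    then have "real_inner_class.orthogonal u w" by (rule u(2))
    then show "u \<bullet> w = 0" by (simp add: real_inner_class.orthogonal_def)
  qed
  then show ?thesis using that u(1) by blast
qed

lemma certificate:
  assumes hb: "bij_betw h {..<CARD('n::finite)} (UNIV::'n set)"
    and g: "good CARD('n) m S" and i: "i < CARD('n) + m"
  shows "\<exists>u v::real^'n. (u \<bullet> frm h S i) * (v \<bullet> frm h S i) \<noteq> 0 \<and>
     (\<forall>i'<CARD('n) + m. i' \<noteq> i \<longrightarrow> (u \<bullet> frm h S i') * (v \<bullet> frm h S i') = 0)"
proof -
  define n where "n = CARD('n)"
  have g0: "\<And>j. j < m \<Longrightarrow> S j \<noteq> {} \<and> S j \<subseteq> {..<n}" using g unfolding good_def n_def by blast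
  have g3: "\<And>c. c < n \<Longrightarrow> card {j. j < m \<and> c \<in> S j} \<le> n - 1" using g unfolding good_def n_def by blast
  have hinj: "inj_on h {..<n}" using hb by (simp add: bij_betw_def n_def)
  have gv0: "gval S (n + 1) j c = 0" if "c \<notin> S j" for j c using that by (simp add: gval_def)
  have gv1: "gval S (n + 1) j c \<noteq> 0" if "c \<in> S j" for j c using that by (simp add: gval_def)
  show ?thesis
  proof (cases "i < n")
    case True
    define D where "D = {j. j < m \<and> i \<in> S j}"
    have cD: "card D \<le> n - 1" using g3 True by (simp add: D_def)
    have "card (rowv h S ` D) < CARD('n)"
    proof -
      have "card (rowv h S ` D) \<le> card D" by (rule card_image_le) (simp add: D_def)
      then show ?thesis using cD True by (simp add: n_def)
    qed
    moreover have "finite (rowv h S ` D)" by (simp add: D_def)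
    ultimately obtain u where u: "u \<noteq> 0" "\<forall>w\<in>rowv h S ` D. u \<bullet> w = 0"
      using exists_orth[of "rowv h S ` D"] by blast
    have uD: "u \<bullet> rowv h S j = 0" if "j < m" "i \<in> S j" for j using u(2) that by (auto simp: D_def)
    have ui: "u $ h i \<noteq> 0"
    proof
      assume "u $ h i = 0"
      then have "u = 0" using zero_of_kill[OF hb g] True uD by (auto simp: n_def)
      then show False using u(1) by simp
    qed
    define v where "v = (axis (h i) 1 :: real^'n)"
    have "(u \<bullet> frm h S i) * (v \<bullet> frm h S i) \<noteq> 0"
      using True ui by (simp add: frm_basis v_def n_def)
    moreover have "(u \<bullet> frm h S i') * (v \<bullet> frm h S i') = 0" if i': "i' < n + m" "i' \<noteq> i" for i'
    proof (cases "i' < n")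
      case True
      then have "h i' \<noteq> h i" using inj_onD[OF hinj, of i' i] \<open>i < n\<close> i'(2) by auto
      then have "v \<bullet> frm h S i' = 0" using True by (simp add: frm_basis v_def n_def axis_def)
      then show ?thesis by simp
    next
      case False
      define j where "j = i' - n"
      have j: "j < m" "frm h S i' = rowv h S j" using i' False by (auto simp: j_def frm_def n_def)
      show ?thesis
      proof (cases "i \<in> S j")
        case True then show ?thesis using uD j by simp
      next
        case False
        have "v \<bullet> rowv h S j = rowv h S j $ h i" by (simp only: v_def axis_dot)
        also have "\<dots> = gval S (CARD('n) + 1) j i" using rowv_h[OF hb] \<open>i < n\<close> by (simp add: n_def)
        also have "\<dots> = 0" using False by (simp add: gval_def)
        finally have "v \<bullet> rowv h S j = 0" .
        then show ?thesis using j by simp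
      qed
    qed
    ultimately show ?thesis unfolding n_def by blast
  next
    case False
    define j where "j = i - n"
    have j: "j < m" "i = n + j" using i False by (auto simp: j_def n_def)
    obtain c where c: "c \<in> S j" using g0[OF j(1)] by blast
    have cn: "c < n" using g0[OF j(1)] c by auto
    define D' where "D' = {j'. j' < m \<and> c \<in> S j' \<and> j' \<noteq> j}"
    have cD': "card D' \<le> n - 2" and n2: "n \<ge> 2"
    proof -
      have "insert j D' = {j'. j' < m \<and> c \<in> S j'}" using j c by (auto simp: D'_def)
      then have "card (insert j D') \<le> n - 1" using g3[OF cn] by simp
      moreover have "j \<notin> D'" by (simp add: D'_def)
      moreover have "finite D'" by (simp add: D'_def)
      ultimately show "card D' \<le> n - 2" "n \<ge> 2" by auto
    qed
    define W where "W = insert (axis (h c) 1) (rowv h S ` D')"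
    have "card W < CARD('n)"
    proof -
      have "card W \<le> Suc (card (rowv h S ` D'))" by (simp add: W_def card_insert_le_m1 D'_def)
      also have "\<dots> \<le> Suc (card D')" by (simp add: card_image_le D'_def)
      finally show ?thesis using cD' n2 by (simp add: n_def)
    qed
    moreover have "finite W" by (simp add: W_def D'_def)
    ultimately obtain v where v: "v \<noteq> 0" "\<forall>w\<in>W. v \<bullet> w = 0"
      using exists_orth[of W] by blast
    have "axis (h c) 1 \<in> W" by (simp add: W_def)
    then have "v \<bullet> axis (h c) 1 = 0" using v(2) by blast
    then have vc: "v $ h c = 0" by (simp only: dot_axis)
    have vD: "v \<bullet> rowv h S j' = 0" if "j' < m" "c \<in> S j'" "j' \<noteq> j" for j'
    proof -
      have "j' \<in> D'" using that by (simp add: D'_def)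
      then have "rowv h S j' \<in> W" by (simp add: W_def)
      then show ?thesis using v(2) by blast
    qed
    have vj: "v \<bullet> rowv h S j \<noteq> 0"
    proof
      assume "v \<bullet> rowv h S j = 0"
      then have "\<forall>j'<m. c \<in> S j' \<longrightarrow> v \<bullet> rowv h S j' = 0" using vD by blast
      then have "v = 0" using zero_of_kill[OF hb g] cn vc by (simp add: n_def)
      then show False using v(1) by simp
    qed
    define u where "u = (axis (h c) 1 :: real^'n)"
    have uj: "u \<bullet> rowv h S j \<noteq> 0"
    proof -
      have "u \<bullet> rowv h S j = rowv h S j $ h c" by (simp only: u_def axis_dot)
      also have "\<dots> = gval S (CARD('n) + 1) j c" using rowv_h[OF hb] cn by (simp add: n_def)
      finally show ?thesis using c by (simp add: gval_def)
    qed
    have "(u \<bullet> frm h S i) * (v \<bullet> frm h S i) \<noteq> 0"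
      using uj vj j(2) frm_row[of u h S j] frm_row[of v h S j] by (simp add: n_def)
    moreover have "(u \<bullet> frm h S i') * (v \<bullet> frm h S i') = 0" if i': "i' < n + m" "i' \<noteq> i" for i'
    proof (cases "i' < n")
      case True
      show ?thesis
      proof (cases "i' = c")
        case True
        then show ?thesis using vc cn by (simp add: frm_basis n_def)
      next
        case False
        then have "h i' \<noteq> h c" using inj_onD[OF hinj, of i' c] cn \<open>i' < n\<close> by auto
        then have "u \<bullet> frm h S i' = 0" using \<open>i' < n\<close> by (simp add: frm_basis u_def n_def axis_def)
        then show ?thesis by simp
      qed
    next
      case False
      define j' where "j' = i' - n"
      have j': "j' < m" "frm h S i' = rowv h S j'" "j' \<noteq> j" using i' False j
        by (auto simp: j'_def frm_def n_def)
      show ?thesis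
      proof (cases "c \<in> S j'")
        case True then show ?thesis using vD j' by simp
      next
        case False
        have "u \<bullet> rowv h S j' = rowv h S j' $ h c" by (simp only: u_def axis_dot)
        also have "\<dots> = gval S (CARD('n) + 1) j' c" using rowv_h[OF hb] cn by (simp add: n_def)
        also have "\<dots> = 0" using False by (simp add: gval_def)
        finally have "u \<bullet> rowv h S j' = 0" .
        then show ?thesis using j' by simp
      qed
    qed
    ultimately show ?thesis unfolding n_def by blast
  qed
qed

definition outer2 :: "real^'n \<Rightarrow> real^'n \<Rightarrow> real^'n^'n" where
  "outer2 u v = (\<chi> r c. u $ r * v $ c + v $ r * u $ c)"

lemma outer2_sym: "outer2 u v \<in> Sym_ops"
  by (simp add: Sym_ops_def outer2_def transpose_def Finite_Cartesian_Product.vec_eq_iff)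

lemma outer2_rank: "rank (outer2 (u::real^'n) v) \<le> 2"
proof -
  define U :: "real^2^'n" where "U = (\<chi> r k. if k = 1 then u $ r else v $ r)"
  define V :: "real^'n^2" where "V = (\<chi> k c. if k = 1 then v $ c else u $ c)"
  have "outer2 u v = U ** V"
    by (simp add: outer2_def U_def V_def matrix_matrix_mult_def sum_2 Finite_Cartesian_Product.vec_eq_iff)
  then have "rank (outer2 u v) \<le> rank V" by (simp add: rank_mul_le_right)
  also have "\<dots> \<le> 2" using rank_bound[of V] by simp
  finally show ?thesis .
qed

lemma outer2_quad: "(outer2 u v *v x) \<bullet> x = 2 * ((u \<bullet> x) * (v \<bullet> x))"
proof -
  have "outer2 u v *v x = (u \<bullet> x) *\<^sub>R v + (v \<bullet> x) *\<^sub>R u"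
    by (simp add: outer2_def matrix_vector_mult_def Finite_Cartesian_Product.vec_eq_iff inner_vec_def
        sum.distrib sum_distrib_left algebra_simps)
  then show ?thesis by (simp add: inner_add_left algebra_simps inner_commute)
qed

theorem theorem2p1:
  fixes N :: nat
  assumes "2 * CARD('n::finite) - 1 \<le> N"
      and "N \<le> CARD('n) * (CARD('n) + 1) div 2"
  shows "\<exists>f :: nat \<Rightarrow> real^'n. exact_PR_frame N f"
proof -
  define n where "n = CARD('n)"
  have n1: "1 \<le> n" by (simp add: n_def Suc_leI)
  obtain m S where mS: "n + m = N" "good n m S"
  proof -
    have "2 * n - 1 \<le> N" "N \<le> n * (n + 1) div 2" using assms by (simp_all add: n_def)
    then show ?thesis using exists_pattern[OF n1, of N] that by blast
  qed
  obtain h where hb0: "bij_betw h {0..<card (UNIV::'n set)} (UNIV::'n set)"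
    using ex_bij_betw_nat_finite[of "UNIV::'n set"] by auto
  have hb: "bij_betw h {..<CARD('n)} (UNIV::'n set)" using hb0 by (simp add: atLeast0LessThan)
  have g: "good CARD('n) m S" using mS(2) by (simp add: n_def)
  define f where "f = frm h S"
  have NN: "N = CARD('n) + m" using mS(1) by (simp add: n_def)
  have isf: "is_frame N f"
    unfolding is_frame_def
  proof -
    have "x \<in> span (f ` {0..<N})" for x :: "real^'n"
    proof -
    have ax: "axis c 1 \<in> f ` {0..<N}" for c
    proof -
      have "ixh h c < CARD('n)" "h (ixh h c) = c" using h_ixh[OF hb] by auto
      then have "f (ixh h c) = axis c 1" by (simp add: f_def frm_def)
      moreover have "ixh h c \<in> {0..<N}" using \<open>ixh h c < CARD('n)\<close> NN by simp
      ultimately show ?thesis by (metis image_eqI)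
    qed
    have "x = (\<Sum>c\<in>UNIV. (x $ c) *\<^sub>R axis c 1)"
      using basis_expansion[of x] by (simp add: scalar_mult_eq_scaleR)
    also have "\<dots> \<in> span (f ` {0..<N})"
      by (intro span_sum span_scale span_base ax)
    finally show "x \<in> span (f ` {0..<N})" .
    qed
    then show "span (f ` {0..<N}) = UNIV" by auto
  qed
  have pr: "phase_retrievable N f"
    unfolding phase_retrievable_def
  proof (intro allI impI)
    fix x y :: "real^'n"
    assume eq: "\<forall>i<N. \<bar>x \<bullet> f i\<bar> = \<bar>y \<bullet> f i\<bar>"
    show "x = y \<or> x = - y"
    proof (rule ccontr)
      assume "\<not> (x = y \<or> x = - y)"
      then have a0: "x - y \<noteq> 0" and b0: "x + y \<noteq> 0" by (auto simp: add_eq_0_iff2)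
      obtain i where i: "i < CARD('n) + m" "((x - y) \<bullet> frm h S i) * ((x + y) \<bullet> frm h S i) \<noteq> 0"
        using no_cover[OF hb g a0 b0] by blast
      have "\<bar>x \<bullet> f i\<bar> = \<bar>y \<bullet> f i\<bar>" using eq i(1) NN by simp
      then have "(x \<bullet> f i) ^ 2 = (y \<bullet> f i) ^ 2" by (metis power2_abs)
      then have "((x - y) \<bullet> f i) * ((x + y) \<bullet> f i) = 0"
        by (simp add: inner_diff_left inner_add_left algebra_simps power2_eq_square)
      then show False using i(2) by (simp add: f_def)
    qed
  qed
  have ex: "exact_PR_redundancy N f"
    unfolding exact_PR_redundancy_def
  proof (intro allI impI)
    fix \<Lambda> assume L: "\<Lambda> \<subset> {0..<N}"
    then obtain i where i: "i \<in> {0..<N}" "i \<notin> \<Lambda>" by blast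
    obtain u v :: "real^'n" where uv: "(u \<bullet> frm h S i) * (v \<bullet> frm h S i) \<noteq> 0"
      "\<forall>i'<CARD('n) + m. i' \<noteq> i \<longrightarrow> (u \<bullet> frm h S i') * (v \<bullet> frm h S i') = 0"
      using certificate[OF hb g, of i] i(1) NN by auto
    define A where "A = outer2 u v"
    have AS2: "A \<in> S2" by (simp add: S2_def A_def outer2_sym outer2_rank)
    have "A \<in> ker_Theta f \<Lambda>"
      unfolding ker_Theta_def
    proof (intro CollectI conjI ballI)
      show "A \<in> Sym_ops" by (simp add: A_def outer2_sym)
      fix i' assume i': "i' \<in> \<Lambda>"
      then have "i' < CARD('n) + m" "i' \<noteq> i" using L i(2) NN by auto
      then show "(A *v f i') \<bullet> f i' = 0" using uv(2) by (simp add: A_def outer2_quad f_def)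
    qed
    moreover have "A \<notin> ker_Theta f {0..<N}"
    proof
      assume "A \<in> ker_Theta f {0..<N}"
      then have "(A *v f i) \<bullet> f i = 0" using i(1) by (simp add: ker_Theta_def)
      then show False using uv(1) by (simp add: A_def outer2_quad f_def)
    qed
    ultimately show "ker_Theta f \<Lambda> \<inter> S2 \<noteq> ker_Theta f {0..<N} \<inter> S2" using AS2 by blast
  qed
  have "exact_PR_frame N f"
    unfolding exact_PR_frame_def PR_frame_def using isf pr ex by blast
  then show ?thesis by blast
qed

end
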